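(* Let $B, G, T \ge 1$ (with $G \ge 2$), and consider a policy $\pi_\theta$ and old policy $\pi_{\mathrm{old}}$. Prompts $q^{(1)},\dots,q^{(B)}$ are sampled independently from a distribution $P_Q$; for each prompt $q^{(b)}$, $G$ completions $o^{(b)}_1,\dots,o^{(b)}_G$ of $T$ tokens are generated from $\pi_{\mathrm{old}}$ and assigned rewards $r^{(b)}_i$. For completion $i$ of prompt $b$ and token $t$ let $\pi_t(\theta) := \pi_\theta(o^{(b)}_{i,t}\mid q^{(b)}, o^{(b)}_{i,1:t-1})/\pi_{\mathrm{old}}(o^{(b)}_{i,t}\mid q^{(b)}, o^{(b)}_{i,1:t-1})$, let $X_i^{(b)} := \frac{1}{T}\sum_{t=1}^T \pi_t(\theta)\nabla_\theta\log\pi_t(\theta)$, and let \[ \mathcal J_1(\theta) := \frac{1}{B}\sum_{b=1}^B \frac{1}{G}\sum_{i=1}^G \frac{1}{T}\sum_{t=1}^T \pi_t(\theta)\hat A_i^{(b)}, \] so that $\nabla_\theta \mathcal J_1(\theta) = \frac{1}{B}\sum_{b=1}^B\frac{1}{G}\sum_{i=1}^G \hat A_i^{(b)} X_i^{(b)}$, where $\hat A_i^{(b)}$ is a per-completion advantage. Assume $\|X_i^{(b)}\| \le C$ for all $i,b$. Then: (1) If $\hat A_i^{(b)}$ is the rank advantage $\hat A_i^{(b)} = 2 - (\rho_b(i)-1)\cdot\frac{4}{G-1}$, where $\rho_b$ is a bijection of $\{1,\dots,G\}$ ranking the completions of prompt $b$ by reward (highest reward gets rank $1$), then $\|\nabla_\theta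 \mathcal J_1(\theta)\| \le 2C$ almost surely. (2) If $\hat A_i^{(b)}$ is the standardized advantage $\hat A_i^{(b)} = (r_i^{(b)} - \mathrm{mean}(r_1^{(b)},\dots,r_G^{(b)}))/\mathrm{std}(r_1^{(b)},\dots,r_G^{(b)})$ and these standardized advantages are sub-Gaussian with $\psi_2$-norms bounded by a constant not depending on $i$, $b$, $G$, then $\|\nabla_\theta\mathcal J_1(\theta)\| = O_p(\sqrt{\log G})$ as $B, G \to \infty$.
   Context: $\|\cdot\|_{\psi_2}$ denotes the sub-Gaussian (Orlicz) norm. $O_p(a_n)$ denotes stochastic boundedness: the quantity divided by $a_n$ is bounded in probability. The constant $C$ may depend on $T$. *)

theory Defs
  imports "HOL-Probability.Probability"
begin

definition grad_J1 :: "nat \<Rightarrow> nat \<Rightarrow> (nat \<Rightarrow> nat \<Rightarrow> real) \<Rightarrow> (nat \<Rightarrow> nat \<Rightarrow> 'v::real_normed_vector) \<Rightarrow> 'v" where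
  "grad_J1 B G A X = (1 / real B) *\<^sub>R (\<Sum>b=1..B. (1 / real G) *\<^sub>R (\<Sum>i=1..G. A b i *\<^sub>R X b i))"

definition rank_adv :: "nat \<Rightarrow> nat \<Rightarrow> real" where
  "rank_adv G k = 2 - (real k - 1) * (4 / (real G - 1))"

definition is_reward_ranking :: "nat \<Rightarrow> (nat \<Rightarrow> real) \<Rightarrow> (nat \<Rightarrow> nat) \<Rightarrow> bool" where
  "is_reward_ranking G r \<rho> \<longleftrightarrow> bij_betw \<rho> {1..G} {1..G} \<and>
     (\<forall>i\<in>{1..G}. \<forall>j\<in>{1..G}. r i > r j \<longrightarrow> \<rho> i < \<rho> j)"

definition group_mean :: "nat \<Rightarrow> (nat \<Rightarrow> real) \<Rightarrow> real" where
  "group_mean G r = (\<Sum>i=1..G. r i) / real G"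

definition group_std :: "nat \<Rightarrow> (nat \<Rightarrow> real) \<Rightarrow> real" where
  "group_std G r = sqrt ((\<Sum>i=1..G. (r i - group_mean G r)^2) / real G)"

definition std_adv :: "nat \<Rightarrow> (nat \<Rightarrow> real) \<Rightarrow> nat \<Rightarrow> real" where
  "std_adv G r i = (r i - group_mean G r) / group_std G r"

definition psi2_norm :: "'a measure \<Rightarrow> ('a \<Rightarrow> real) \<Rightarrow> ereal" where
  "psi2_norm M Y = Inf {ereal s | s. s > 0 \<and> (\<integral>\<^sup>+ \<omega>. ennreal (exp ((Y \<omega>)^2 / s^2)) \<partial>M) \<le> 2}"

definition bounded_in_prob :: "'a measure \<Rightarrow> ('n \<Rightarrow> 'a \<Rightarrow> real) \<Rightarrow> ('n \<Rightarrow> real) \<Rightarrow> 'n filter \<Rightarrow> bool" where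
  "bounded_in_prob M Y a F \<longleftrightarrow>
     (\<forall>\<epsilon>>0. \<exists>K. eventually (\<lambda>n. measure M {\<omega>\<in>space M. \<bar>Y n \<omega> / a n\<bar> > K} \<le> \<epsilon>) F)"

end

theory Submission
  imports Defs
begin

lemma grad_bound:
  fixes X :: "nat \<Rightarrow> nat \<Rightarrow> 'v::real_normed_vector"
  assumes "B \<ge> 1" "G \<ge> 1"
    and h: "\<And>b. b \<in> {1..B} \<Longrightarrow> (\<Sum>i=1..G. \<bar>A b i\<bar> * norm (X b i)) \<le> real G * D"
  shows "norm (grad_J1 B G A X) \<le> D"
proof -
  have "norm (grad_J1 B G A X) = (1 / real B) * norm (\<Sum>b=1..B. (1 / real G) *\<^sub>R (\<Sum>i=1..G. A b i *\<^sub>R X b i))"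
    unfolding grad_J1_def by simp
  also have "\<dots> \<le> (1 / real B) * (\<Sum>b=1..B. norm ((1 / real G) *\<^sub>R (\<Sum>i=1..G. A b i *\<^sub>R X b i)))"
    by (rule mult_left_mono[OF norm_sum]) simp
  also have "\<dots> \<le> (1 / real B) * (\<Sum>b=1..B. D)"
  proof (intro mult_left_mono sum_mono)
    fix b assume b: "b \<in> {1..B}"
    have "norm ((1 / real G) *\<^sub>R (\<Sum>i=1..G. A b i *\<^sub>R X b i)) = (1 / real G) * norm (\<Sum>i=1..G. A b i *\<^sub>R X b i)"
      by simp
    also have "\<dots> \<le> (1 / real G) * (\<Sum>i=1..G. \<bar>A b i\<bar> * norm (X b i))"
      by (intro mult_left_mono) (auto intro: order.trans[OF norm_sum])
    also have "\<dots> \<le> (1 / real G) * (real G * D)"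
      by (intro mult_left_mono h b) auto
    also have "\<dots> = D" using assms by simp
    finally show "norm ((1 / real G) *\<^sub>R (\<Sum>i=1..G. A b i *\<^sub>R X b i)) \<le> D" .
  qed simp
  also have "\<dots> = D" using assms by simp
  finally show ?thesis .
qed

lemma std_abs_sum:
  assumes "G \<ge> 1"
  shows "(\<Sum>i=1..G. \<bar>std_adv G r i\<bar>) \<le> real G"
proof -
  define m where "m = group_mean G r"
  define S where "S = (\<Sum>i=1..G. (r i - m)^2)"
  define s where "s = group_std G r"
  have s: "s = sqrt (S / real G)" unfolding s_def S_def m_def group_std_def by simp
  show ?thesis
  proof (cases "s = 0")
    case True
    then show ?thesis unfolding std_adv_def s_def by simp
  next
    case False
    have S0: "S \<ge> 0" unfolding S_def by (simp add: sum_nonneg)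
    hence spos: "s > 0" using False s by simp
    have s2: "s^2 = S / real G" using s S0 by simp
    have "(\<Sum>i=1..G. \<bar>r i - m\<bar>)^2 \<le> (\<Sum>i=1..G. \<bar>r i - m\<bar>^2) * card {1..G}"
      by (rule sum_squared_le_sum_of_squares)
    also have "\<dots> = S * real G" unfolding S_def by simp
    also have "\<dots> = (real G * s)^2"
    proof -
      have "(real G * s)^2 = real G * real G * s^2" by (simp add: power2_eq_square)
      also have "\<dots> = real G * real G * (S / real G)" by (simp only: s2)
      also have "\<dots> = S * real G" using assms by simp
      finally show ?thesis by simp
    qed
    finally have sq: "(\<Sum>i=1..G. \<bar>r i - m\<bar>)^2 \<le> (real G * s)^2" .
    have "(\<Sum>i=1..G. \<bar>r i - m\<bar>) \<le> real G * s"
      by (rule power2_le_imp_le[OF sq]) (use spos in simp)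
    moreover have "(\<Sum>i=1..G. \<bar>std_adv G r i\<bar>) = (\<Sum>i=1..G. \<bar>r i - m\<bar>) / s"
      unfolding std_adv_def m_def s_def using spos s_def
      by (simp add: sum_divide_distrib)
    ultimately show ?thesis using spos by (simp add: divide_le_eq)
  qed
qed

theorem theoremD1:
  fixes M :: "'a measure" and PQ :: "'q measure" and C :: real
    and q :: "nat \<Rightarrow> nat \<Rightarrow> nat \<Rightarrow> 'a \<Rightarrow> 'q"
    and r :: "nat \<Rightarrow> nat \<Rightarrow> nat \<Rightarrow> nat \<Rightarrow> 'a \<Rightarrow> real"
    and X :: "nat \<Rightarrow> nat \<Rightarrow> nat \<Rightarrow> nat \<Rightarrow> 'a \<Rightarrow> 'v::euclidean_space"
  assumes "prob_space M" and "prob_space PQ"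
    and prompts_iid: "\<And>B G. prob_space.indep_vars M (\<lambda>_. PQ) (q B G) {1..B}"
    and prompts_dist: "\<And>B G b. b \<in> {1..B} \<Longrightarrow> distr M PQ (q B G b) = PQ"
    and r_meas: "\<And>B G b i. r B G b i \<in> borel_measurable M"
    and X_meas: "\<And>B G b i. X B G b i \<in> borel_measurable M"
    and X_bound: "\<And>B G b i \<omega>. b \<in> {1..B} \<Longrightarrow> i \<in> {1..G} \<Longrightarrow> \<omega> \<in> space M \<Longrightarrow>
                    norm (X B G b i \<omega>) \<le> C"
  shows
    "(\<forall>B G (\<rho> :: nat \<Rightarrow> nat \<Rightarrow> nat \<Rightarrow> 'a \<Rightarrow> nat \<Rightarrow> nat). B \<ge> 1 \<longrightarrow> G \<ge> 2 \<longrightarrow>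
        (\<forall>\<omega>\<in>space M. \<forall>b\<in>{1..B}. is_reward_ranking G (\<lambda>i. r B G b i \<omega>) (\<rho> B G b \<omega>)) \<longrightarrow>
        (AE \<omega> in M. norm (grad_J1 B G (\<lambda>b i. rank_adv G (\<rho> B G b \<omega> i)) (\<lambda>b i. X B G b i \<omega>)) \<le> 2 * C))
     \<and>
     ((\<exists>K::real. \<forall>B G b i. B \<ge> 1 \<longrightarrow> G \<ge> 2 \<longrightarrow> b \<in> {1..B} \<longrightarrow> i \<in> {1..G} \<longrightarrow>
         psi2_norm M (\<lambda>\<omega>. std_adv G (\<lambda>j. r B G b j \<omega>) i) \<le> ereal K) \<longrightarrow>
      bounded_in_prob M
        (\<lambda>(B, G) \<omega>. norm (grad_J1 B G (\<lambda>b i. std_adv G (\<lambda>j. r B G b j \<omega>) i) (\<lambda>b i. X B G b i \<omega>)))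
        (\<lambda>(B, G). sqrt (ln (real G)))
        (at_top \<times>\<^sub>F at_top))"
proof -
  interpret P: prob_space M by fact
  have part1: "\<forall>B G (\<rho> :: nat \<Rightarrow> nat \<Rightarrow> nat \<Rightarrow> 'a \<Rightarrow> nat \<Rightarrow> nat). B \<ge> 1 \<longrightarrow> G \<ge> 2 \<longrightarrow>
        (\<forall>\<omega>\<in>space M. \<forall>b\<in>{1..B}. is_reward_ranking G (\<lambda>i. r B G b i \<omega>) (\<rho> B G b \<omega>)) \<longrightarrow>
        (AE \<omega> in M. norm (grad_J1 B G (\<lambda>b i. rank_adv G (\<rho> B G b \<omega> i)) (\<lambda>b i. X B G b i \<omega>)) \<le> 2 * C)"
  proof (intro allI impI AE_I2)
    fix B G :: nat and \<rho> :: "nat \<Rightarrow> nat \<Rightarrow> nat \<Rightarrow> 'a \<Rightarrow> nat \<Rightarrow> nat" and \<omega>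
    assume B: "B \<ge> 1" and G: "G \<ge> 2"
      and rk: "\<forall>\<omega>\<in>space M. \<forall>b\<in>{1..B}. is_reward_ranking G (\<lambda>i. r B G b i \<omega>) (\<rho> B G b \<omega>)"
      and w: "\<omega> \<in> space M"
    show "norm (grad_J1 B G (\<lambda>b i. rank_adv G (\<rho> B G b \<omega> i)) (\<lambda>b i. X B G b i \<omega>)) \<le> 2 * C"
    proof (rule grad_bound)
      fix b assume b: "b \<in> {1..B}"
      have bij: "bij_betw (\<rho> B G b \<omega>) {1..G} {1..G}"
        using rk w b unfolding is_reward_ranking_def by blast
      have "(\<Sum>i=1..G. \<bar>rank_adv G (\<rho> B G b \<omega> i)\<bar> * norm (X B G b i \<omega>)) \<le> (\<Sum>i=1..G. 2 * C)"
      proof (rule sum_mono)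
        fix i assume i: "i \<in> {1..G}"
        have k: "\<rho> B G b \<omega> i \<in> {1..G}" using bij i by (auto dest: bij_betw_apply)
        have "\<bar>rank_adv G (\<rho> B G b \<omega> i)\<bar> \<le> 2"
        proof -
          define k where "k = real (\<rho> B G b \<omega> i)"
          have k1: "1 \<le> k" "k \<le> real G" using k unfolding k_def by auto
          have Gp: "real G - 1 > 0" using G by simp
          have "(k - 1) * (4 / (real G - 1)) \<le> 4"
            using k1 Gp by (simp add: field_simps)
          moreover have "(k - 1) * (4 / (real G - 1)) \<ge> 0" using k1 Gp by simp
          ultimately show ?thesis unfolding rank_adv_def k_def[symmetric] by linarith
        qed
        moreover have "norm (X B G b i \<omega>) \<le> C" using X_bound b i w by blast
        moreover have "\<bar>rank_adv G (\<rho> B G b \<omega> i)\<bar> * norm (X B G b i \<omega>) \<le> 2 * norm (X B G b i \<omega>)"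
          by (rule mult_right_mono[OF calculation(1) norm_ge_zero])
        ultimately show "\<bar>rank_adv G (\<rho> B G b \<omega> i)\<bar> * norm (X B G b i \<omega>) \<le> 2 * C"
          by linarith
      qed
      also have "\<dots> = real G * (2 * C)" by simp
      finally show "(\<Sum>i=1..G. \<bar>rank_adv G (\<rho> B G b \<omega> i)\<bar> * norm (X B G b i \<omega>)) \<le> real G * (2 * C)" .
    qed (use B G in auto)
  qed
  obtain w0 where w0: "w0 \<in> space M" using P.not_empty by blast
  have "norm (X 1 1 1 1 w0) \<le> C" using X_bound[of 1 1 1 1 w0] w0 by simp
  hence C0: "C \<ge> 0" using norm_ge_zero order.trans by blast
  have bnd: "norm (grad_J1 B G (\<lambda>b i. std_adv G (\<lambda>j. r B G b j \<omega>) i) (\<lambda>b i. X B G b i \<omega>)) \<le> C"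
    if B: "B \<ge> 1" and G: "G \<ge> 1" and w: "\<omega> \<in> space M" for B G \<omega>
  proof (rule grad_bound)
    fix b assume b: "b \<in> {1..B}"
    have "(\<Sum>i=1..G. \<bar>std_adv G (\<lambda>j. r B G b j \<omega>) i\<bar> * norm (X B G b i \<omega>))
        \<le> (\<Sum>i=1..G. \<bar>std_adv G (\<lambda>j. r B G b j \<omega>) i\<bar> * C)"
      by (intro sum_mono mult_left_mono) (use X_bound b w in auto)
    also have "\<dots> = C * (\<Sum>i=1..G. \<bar>std_adv G (\<lambda>j. r B G b j \<omega>) i\<bar>)"
      by (simp add: sum_distrib_left mult_ac)
    also have "\<dots> \<le> C * real G"
      by (intro mult_left_mono std_abs_sum G C0)
    finally show "(\<Sum>i=1..G. \<bar>std_adv G (\<lambda>j. r B G b j \<omega>) i\<bar> * norm (X B G b i \<omega>)) \<le> real G * C"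
      by (simp add: mult.commute)
  qed (use B G in auto)
  have key: "measure M {\<omega>\<in>space M. \<bar>norm (grad_J1 B G (\<lambda>b i. std_adv G (\<lambda>j. r B G b j \<omega>) i) (\<lambda>b i. X B G b i \<omega>)) / sqrt (ln (real G))\<bar> > C} = 0"
    if B: "B \<ge> 1" and G: "G \<ge> 3" for B G :: nat
  proof -
    have "exp 1 \<le> (3::real)" using exp_le by simp
    hence "ln (real G) \<ge> 1" using G by (subst ln_ge_iff) auto
    hence a1: "sqrt (ln (real G)) \<ge> 1" by simp
    have "{\<omega>\<in>space M. \<bar>norm (grad_J1 B G (\<lambda>b i. std_adv G (\<lambda>j. r B G b j \<omega>) i) (\<lambda>b i. X B G b i \<omega>)) / sqrt (ln (real G))\<bar> > C} = {}"
    proof (rule equals0I)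
      fix \<omega> assume wm: "\<omega> \<in> {\<omega>\<in>space M. \<bar>norm (grad_J1 B G (\<lambda>b i. std_adv G (\<lambda>j. r B G b j \<omega>) i) (\<lambda>b i. X B G b i \<omega>)) / sqrt (ln (real G))\<bar> > C}"
      have w: "\<omega> \<in> space M" using wm by blast
      have gt: "\<bar>norm (grad_J1 B G (\<lambda>b i. std_adv G (\<lambda>j. r B G b j \<omega>) i) (\<lambda>b i. X B G b i \<omega>)) / sqrt (ln (real G))\<bar> > C" using wm by blast
      define Y where "Y = norm (grad_J1 B G (\<lambda>b i. std_adv G (\<lambda>j. r B G b j \<omega>) i) (\<lambda>b i. X B G b i \<omega>))"
      have Y: "Y \<le> C" "Y \<ge> 0" unfolding Y_def using bnd[OF B _ w] G by auto
      have "\<bar>Y / sqrt (ln (real G))\<bar> = Y / sqrt (ln (real G))" using Y a1 by simp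
      also have "\<dots> \<le> Y" using Y a1 by (simp add: divide_le_eq mult_le_cancel_left1)
      finally show False using gt Y unfolding Y_def by simp
    qed
    then show ?thesis by (metis measure_empty)
  qed
  have ev: "eventually (\<lambda>x. fst x \<ge> (1::nat) \<and> snd x \<ge> (3::nat)) (at_top \<times>\<^sub>F at_top)"
    by (intro eventually_prodI eventually_ge_at_top)
  have part2: "bounded_in_prob M
        (\<lambda>(B, G) \<omega>. norm (grad_J1 B G (\<lambda>b i. std_adv G (\<lambda>j. r B G b j \<omega>) i) (\<lambda>b i. X B G b i \<omega>)))
        (\<lambda>(B, G). sqrt (ln (real G)))
        (at_top \<times>\<^sub>F at_top)"
    unfolding bounded_in_prob_def
    apply (intro allI impI)
    apply (rule exI[of _ C])
    apply (rule eventually_mono[OF ev])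
    apply (simp only: split_paired_all prod.case fst_conv snd_conv)
    apply (subst key)
      apply auto
    done
  show ?thesis by (rule conjI[OF part1 impI[OF part2]])
qed

end
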